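(* Let $q_3\in\{1,2,4\}$, let $p_4>q_4>0$ be coprime with $\gcd(p_4,30)=1$, and let $T=\{(2,1),(3,2),(5,q_3),(p_4,q_4)\}$ satisfy $0<K^2(T)\le 3e_{\mathrm{orb}}(T)$. Write $p_4/(p_4-q_4)=[n_1,\dots,n_\ell]$. Then $\sum_{j=1}^\ell n_j-3\ell\in\{-2,-3\}$ if $q_3=1$, $\in\{-4,-5\}$ if $q_3=2$, and $\in\{-7,-8\}$ if $q_3=4$.
   Context: Hirzebruch–Jung continued fraction: $[a_1,\dots,a_\ell]=a_1-1/(a_2-1/(\cdots-1/a_\ell))$, $a_i\ge 2$. For a type $T=\{(p_i,q_i)\}_{i=1}^4$ write $p_i/(p_i-q_i)=[n_{i,1},\dots,n_{i,\ell_i}]$, $L=\sum\ell_i$, $q_i^{-1}$ the inverse of $q_i$ mod $p_i$ in $(0,p_i)$; $K^2(T)=9-3L+\sum_{i,j}n_{i,j}-\sum_i\frac{q_i+q_i^{-1}-2}{p_i}$ and $e_{\mathrm{orb}}(T)=3-\sum_i(1-1/p_i)$ (so here $3e_{\mathrm{orb}}(T)=\frac1{10}+\frac3{p_4}$). *)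

theory Defs
  imports Complex_Main
begin

text \<open>Hirzebruch--Jung continued fraction expansion of the rational number p/r > 1:
  hj p r = [a_1,...,a_l] with a_i >= 2 and p/r = a_1 - 1/(a_2 - 1/(... - 1/a_l)).  Returns [] for invalid input (r = 0 or p <= r).\<close>

function hj :: "nat \<Rightarrow> nat \<Rightarrow> nat list" where
  "hj p r = (if r = 0 \<or> p \<le> r then []
             else (let a = (p + r - 1) div r in
                   if a * r = p then [a] else a # hj r (a * r - p)))"
  by pat_completeness auto
termination
proof (relation "measure snd")
  fix p r a :: nat
  assume h: "\<not> (r = 0 \<or> p \<le> r)" "a = (p + r - 1) div r" "a * r \<noteq> p"
  have "a * r \<le> p + r - 1" using h using div_times_less_eq_dividend[of "p + r - 1" r] by simp
  then have "a * r - p < r" using h by linarith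
  then show "((r, a * r - p), p, r) \<in> measure snd" by simp
qed auto

fun hj_val :: "nat list \<Rightarrow> real" where
  "hj_val [] = 0"
| "hj_val [a] = real a"
| "hj_val (a # b # rest) = real a - 1 / hj_val (b # rest)"

definition qinv :: "nat \<Rightarrow> nat \<Rightarrow> nat" where
  "qinv p q = (THE x. 0 < x \<and> x < p \<and> (q * x) mod p = 1 mod p)"

definition hjT :: "nat \<times> nat \<Rightarrow> nat list" where
  "hjT pq = hj (fst pq) (fst pq - snd pq)"

definition K2 :: "(nat \<times> nat) list \<Rightarrow> real" where
  "K2 T = 9 - 3 * real (\<Sum>pq\<leftarrow>T. length (hjT pq))
            + real (\<Sum>pq\<leftarrow>T. sum_list (hjT pq))
            - (\<Sum>pq\<leftarrow>T. (real (snd pq) + real (qinv (fst pq) (snd pq)) - 2) / real (fst pq))"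

definition e_orb :: "(nat \<times> nat) list \<Rightarrow> real" where
  "e_orb T = 3 - (\<Sum>pq\<leftarrow>T. 1 - 1 / real (fst pq))"

end

theory Submission imports Defs "HOL-Number_Theory.Cong" begin
lemma qinv_eq:
  assumes "1 < p" "coprime p q" "0 < x" "x < p" "(q*x) mod p = 1 mod p"
  shows "qinv p q = x"
  unfolding qinv_def
proof (rule the_equality)
  show "0 < x \<and> x < p \<and> q * x mod p = 1 mod p" using assms by auto
next
  fix y assume y: "0 < y \<and> y < p \<and> q * y mod p = 1 mod p"
  have "[q*y = q*x] (mod p)" using y assms unfolding cong_def by simp
  hence "[y = x] (mod p)" using assms(2) cong_mult_lcancel_nat
    by (metis coprime_commute)
  thus "y = x" using y assms unfolding cong_def by simp
qed
lemma qinv_lt: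
  assumes "1 < p" "coprime p q"
  shows "qinv p q < p"
proof -
  have "coprime q p" using assms(2) by (simp add: coprime_commute)
  then obtain x where x: "[q*x = 1] (mod p)" using cong_solve_coprime_nat[of q p] by auto
  define y where "y = x mod p"
  have "[q*y = 1] (mod p)" using x unfolding y_def cong_def by (simp add: mod_mult_right_eq)
  moreover have "y \<noteq> 0" using x assms unfolding y_def cong_def
    by (metis mod_mult_right_eq mult_0_right mod_0 mod_less not_one_less_zero zero_neq_one)
  moreover have "y < p" using assms unfolding y_def by simp
  ultimately show ?thesis using qinv_eq[of p q y] assms unfolding cong_def by simp
qed
lemma qinvs: "qinv 2 1 = 1" "qinv 3 2 = 2" "qinv 5 1 = 1" "qinv 5 2 = 3" "qinv 5 4 = 4"
  by (rule qinv_eq; simp)+ (rule qinv_eq; simp add: coprime_Suc_left_nat[of 4, simplified])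
lemma p7_lemma: "p4 \<ge> 7" if "gcd p4 30 = (1::nat)" "0 < q4" "q4 < p4" for p4 q4 :: nat
proof (rule ccontr)
  assume "\<not> 7 \<le> p4" then have "p4 = 2 \<or> p4 = 3 \<or> p4 = 4 \<or> p4 = 5 \<or> p4 = 6" using that by linarith
  then obtain d :: nat where "d dvd p4" "d dvd 30" "d > 1" by (elim disjE) (rule that[of 2] that[of 3] that[of 5]; simp)+
  hence "d dvd gcd p4 30" by simp
  thus False using that `d > 1` by simp
qed
lemma hjs: "hj 5 4 = [2,2,2,2]" "hj 5 3 = [2,3]" "hj 5 1 = [5]" "hj 2 1 = [2]" "hj 3 1 = [3]"
  by ((subst hj.simps, simp)+)+

theorem mainTheorem13:
  fixes q3 p4 q4 :: nat
  assumes "q3 \<in> {1, 2, 4}"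
    and "0 < q4" and "q4 < p4"
    and "coprime p4 q4"
    and "gcd p4 30 = 1"
    and "0 < K2 [(2,1), (3,2), (5,q3), (p4,q4)]"
    and "K2 [(2,1), (3,2), (5,q3), (p4,q4)] \<le> 3 * e_orb [(2,1), (3,2), (5,q3), (p4,q4)]"
  shows "(let ns = hj p4 (p4 - q4);
              s = int (sum_list ns) - 3 * int (length ns)
          in (q3 = 1 \<longrightarrow> s \<in> {-2, -3})
           \<and> (q3 = 2 \<longrightarrow> s \<in> {-4, -5})
           \<and> (q3 = 4 \<longrightarrow> s \<in> {-7, -8}))"
proof -
  define ns where "ns = hj p4 (p4 - q4)"
  define s where "s = int (sum_list ns) - 3 * int (length ns)"
  define u where "u = 1 / real p4"
  define c where "c = (real q4 + real (qinv p4 q4) - 2) / real p4"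
  have p7: "p4 \<ge> 7" by (rule p7_lemma[OF assms(5,2,3)])
  have qi: "qinv p4 q4 < p4" using qinv_lt[of p4 q4] p7 assms by simp
  have u1: "u \<le> 1/7" "0 < u" using p7 unfolding u_def by (auto simp: field_simps)
  have "real q4 + real (qinv p4 q4) - 2 \<le> 2 * real p4 - 4" using qi assms by linarith
  hence "c \<le> (2 * real p4 - 4) / real p4" unfolding c_def by (rule divide_right_mono) simp
  also have "\<dots> = 2 - 4 * u" using p7 unfolding u_def by (simp add: diff_divide_distrib)
  finally have c1: "c \<le> 2 - 4 * u" .
  have "real q4 + real (qinv p4 q4) - 2 \<ge> - 1" using qi assms by linarith
  hence "c \<ge> (- 1) / real p4" unfolding c_def by (rule divide_right_mono) simp
  hence c2: "c \<ge> - u" unfolding u_def by simp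
  have E: "3 * e_orb [(2,1), (3,2), (5,q3), (p4,q4)] = 1/10 + 3 * u"
    unfolding e_orb_def u_def by simp
  have hT: "hjT (p4, q4) = ns" unfolding hjT_def ns_def by simp
  have rs: "real_of_int s = real (sum_list ns) - 3 * real (length ns)" unfolding s_def by simp
  have K: "K2 [(2,1), (3,2), (5,q3), (p4,q4)] = 9 - 3 * real (2 + length (hjT (5,q3)) + length ns)
     + real (5 + sum_list (hjT (5,q3)) + sum_list ns) - 2/3 - (real q3 + real (qinv 5 q3) - 2)/5 - c"
    unfolding K2_def c_def using hT by (simp del: hj.simps add: algebra_simps hjT_def hjs hjs[simplified] qinvs qinvs[simplified])
  have "(q3 = 1 \<longrightarrow> s \<in> {-2, -3}) \<and> (q3 = 2 \<longrightarrow> s \<in> {-4, -5}) \<and> (q3 = 4 \<longrightarrow> s \<in> {-7, -8})"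
  proof (intro conjI impI)
    assume "q3 = 1"
    then have "real_of_int s > -4" "real_of_int s < -1" using K E assms(6,7) c1 c2 u1 rs
      by (simp_all del: hj.simps add: hjT_def hjs hjs[simplified] qinvs qinvs[simplified])
    thus "s \<in> {-2,-3}" by auto
  next
    assume "q3 = 2"
    then have "real_of_int s > -6" "real_of_int s < -3" using K E assms(6,7) c1 c2 u1 rs
      by (simp_all del: hj.simps add: hjT_def hjs hjs[simplified] qinvs qinvs[simplified])
    thus "s \<in> {-4,-5}" by auto
  next
    assume "q3 = 4"
    then have "real_of_int s > -9" "real_of_int s < -6" using K E assms(6,7) c1 c2 u1 rs
      by (simp_all del: hj.simps add: hjT_def hjs hjs[simplified] qinvs qinvs[simplified])
    thus "s \<in> {-7,-8}" by auto
  qed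
  thus ?thesis unfolding s_def ns_def Let_def .
qed
end
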